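(* Let $p$ be an odd prime and $m=p-1$. For $b,b'\in\{0,\ldots,p-1\}$ with $b\ne b'$, if $b+b'=(p-1)/2$ or $b+b'=(3p-1)/2$, then $r_{ave}(\tilde E_b)=r_{ave}(\tilde E_{b'})$.
   Context: $h=(1,\ldots,m)$; $D_0$ is the $p\times m$ matrix whose $i$th row is $i\,h\pmod p$, $i=1,\ldots,p$. The Williams transformation on $\{0,\ldots,p-1\}$ is $W(x)=2x$ for $0\le x<p/2$ and $W(x)=2(p-x)-1$ for $p/2\le x\le p-1$. $D_b=D_0+b\pmod p$, $E_b=W(D_b)$ entrywise, and $\tilde E_b$ is obtained from $E_b$ by deleting its last row (which is $(W(b),\ldots,W(b))$) and replacing each entry $x$ by $x+1$ if $x<W(b)$ and by $x$ if $x>W(b)$. For an $m$-column matrix $O$, $r_{ave}(O)=\sum_{u\ne v}|r_{uv}(O)|/\{m(m-1)\}$ with $r_{uv}(O)$ the Pearson correlation between columns $u$ and $v$. *)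

theory Defs
  imports Complex_Main "HOL-Computational_Algebra.Primes"
begin

text \<open>Matrices are functions nat => nat => real (row index, column index),
  rows indexed 1..n and columns 1..m.\<close>

definition williams :: "nat \<Rightarrow> nat \<Rightarrow> nat" where
  "williams p x = (if real x < real p / 2 then 2 * x else 2 * (p - x) - 1)"

definition D0 :: "nat \<Rightarrow> nat \<Rightarrow> nat \<Rightarrow> nat" where
  "D0 p i j = (i * j) mod p"

definition Db :: "nat \<Rightarrow> nat \<Rightarrow> nat \<Rightarrow> nat \<Rightarrow> nat" where
  "Db p b i j = (D0 p i j + b) mod p"

definition Eb :: "nat \<Rightarrow> nat \<Rightarrow> nat \<Rightarrow> nat \<Rightarrow> nat" where
  "Eb p b i j = williams p (Db p b i j)"

text \<open>Tilde E_b: last row (i = p) deleted, i.e. rows 1..p-1 are used;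
  entries x < W(b) become x+1, entries x > W(b) are unchanged.\<close>
definition Etilde :: "nat \<Rightarrow> nat \<Rightarrow> nat \<Rightarrow> nat \<Rightarrow> real" where
  "Etilde p b i j = (let x = Eb p b i j in
      if x < williams p b then real x + 1 else real x)"

definition col_mean :: "nat \<Rightarrow> (nat \<Rightarrow> nat \<Rightarrow> real) \<Rightarrow> nat \<Rightarrow> real" where
  "col_mean n M u = (\<Sum>i=1..n. M i u) / real n"

definition pearson :: "nat \<Rightarrow> (nat \<Rightarrow> nat \<Rightarrow> real) \<Rightarrow> nat \<Rightarrow> nat \<Rightarrow> real" where
  "pearson n M u v =
     (\<Sum>i=1..n. (M i u - col_mean n M u) * (M i v - col_mean n M v)) /
     sqrt ((\<Sum>i=1..n. (M i u - col_mean n M u)^2) * (\<Sum>i=1..n. (M i v - col_mean n M v)^2))"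

definition r_ave :: "nat \<Rightarrow> nat \<Rightarrow> (nat \<Rightarrow> nat \<Rightarrow> real) \<Rightarrow> real" where
  "r_ave n m M = (\<Sum>u\<in>{1..m}. \<Sum>v\<in>{1..m} - {u}. \<bar>pearson n M u v\<bar>) / (real m * (real m - 1))"

end

theory Submission
  imports Defs
begin

lemma col_mean_refl:
  assumes bij: "bij_betw \<sigma> {1..n} {1..n}"
    and h: "\<And>i. i \<in> {1..n} \<Longrightarrow> M' i u = c - M (\<sigma> i) u" and n: "n > 0"
  shows "col_mean n M' u = c - col_mean n M u"
proof -
  have "(\<Sum>i=1..n. M' i u) = (\<Sum>i=1..n. c - M (\<sigma> i) u)"
    using h by (intro sum.cong) auto
  also have "\<dots> = real n * c - (\<Sum>i=1..n. M (\<sigma> i) u)"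
    by (simp add: sum_subtractf)
  also have "(\<Sum>i=1..n. M (\<sigma> i) u) = (\<Sum>i=1..n. M i u)"
    using sum.reindex_bij_betw[OF bij, of "\<lambda>i. M i u"] by simp
  finally show ?thesis using n unfolding col_mean_def by (simp add: field_simps)
qed

lemma pearson_refl:
  assumes bij: "bij_betw \<sigma> {1..n} {1..n}"
    and h: "\<And>i w. i \<in> {1..n} \<Longrightarrow> w \<in> {u, v} \<Longrightarrow> M' i w = c - M (\<sigma> i) w" and n: "n > 0"
  shows "pearson n M' u v = pearson n M u v"
proof -
  have cm: "col_mean n M' w = c - col_mean n M w" if "w \<in> {u, v}" for w
    using col_mean_refl[where \<sigma>=\<sigma> and M'=M' and c=c and M=M and u=w, OF bij _ n] h that by blast
  have dev: "\<And>i w. i \<in> {1..n} \<Longrightarrow> w \<in> {u, v} \<Longrightarrow> M' i w - col_mean n M' w = - (M (\<sigma> i) w - col_mean n M w)"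
    using cm h by simp
  have s1: "(\<Sum>i=1..n. (M' i u - col_mean n M' u) * (M' i v - col_mean n M' v))
      = (\<Sum>i=1..n. (M i u - col_mean n M u) * (M i v - col_mean n M v))"
  proof -
    have "(\<Sum>i=1..n. (M' i u - col_mean n M' u) * (M' i v - col_mean n M' v))
      = (\<Sum>i=1..n. (\<lambda>k. (M k u - col_mean n M u) * (M k v - col_mean n M v)) (\<sigma> i))"
      using dev by (intro sum.cong refl) (auto simp: dev algebra_simps)
    also have "\<dots> = (\<Sum>i=1..n. (M i u - col_mean n M u) * (M i v - col_mean n M v))"
      using sum.reindex_bij_betw[OF bij] by simp
    finally show ?thesis .
  qed
  have s2: "\<And>w. w \<in> {u, v} \<Longrightarrow> (\<Sum>i=1..n. (M' i w - col_mean n M' w)^2)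
      = (\<Sum>i=1..n. (M i w - col_mean n M w)^2)"
  proof -
    fix w assume w: "w \<in> {u, v}"
    have "(\<Sum>i=1..n. (M' i w - col_mean n M' w)^2)
      = (\<Sum>i=1..n. (\<lambda>k. (M k w - col_mean n M w)^2) (\<sigma> i))"
      using dev by (intro sum.cong refl) (simp only: dev[OF _ w] power2_minus)
    also have "\<dots> = (\<Sum>i=1..n. (M i w - col_mean n M w)^2)"
      using sum.reindex_bij_betw[OF bij] by simp
    finally show "(\<Sum>i=1..n. (M' i w - col_mean n M' w)^2)
      = (\<Sum>i=1..n. (M i w - col_mean n M w)^2)" .
  qed
  show ?thesis unfolding pearson_def s1 using s2[of u] s2[of v] by simp
qed

lemma williams_nat: "williams p x = (if 2 * x < p then 2 * x else 2 * (p - x) - 1)"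
proof -
  have "(real x < real p / 2) = (2 * x < p)" by linarith
  then show ?thesis unfolding williams_def by simp
qed

lemma williams_refl:
  assumes "odd p" "y < p"
  shows "williams p ((p div 2 + p - y) mod p) = p - 1 - williams p y"
proof -
  obtain k where k: "p = 2 * k + 1" using assms(1) oddE by blast
  have pd: "p div 2 = k" using k by simp
  show ?thesis
  proof (cases "2 * y < p")
    case True
    then have y: "y \<le> k" using k by linarith
    have "p div 2 + p - y = (k - y) + p" using y pd by linarith
    then have "(p div 2 + p - y) mod p = (k - y) mod p" by (simp only: mod_add_self2)
    also have "\<dots> = k - y" using k by (intro mod_less) linarith
    finally have "(p div 2 + p - y) mod p = k - y" .
    moreover have "williams p (k - y) = 2 * (k - y)" using k y by (simp add: williams_nat)
    moreover have "williams p y = 2 * y" using True by (simp add: williams_nat)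
    ultimately show ?thesis using k y by simp
  next
    case False
    then have y: "y > k" using k by linarith
    have "(p div 2 + p - y) mod p = k + p - y"
    proof -
      have "k + p - y < p" using y assms(2) by linarith
      then show ?thesis using pd by simp
    qed
    moreover have "williams p (k + p - y) = 2 * (p - (k + p - y)) - 1"
      using k y assms by (simp add: williams_nat)
    moreover have "williams p y = 2 * (p - y) - 1" using False by (simp add: williams_nat)
    ultimately show ?thesis using k y assms by simp
  qed
qed

lemma williams_lt: "y < p \<Longrightarrow> williams p y < p"
  by (simp add: williams_nat) arith

lemma williams_inj:
  assumes "odd p" "x < p" "y < p" "williams p x = williams p y"
  shows "x = y"
  using assms unfolding williams_nat by (auto split: if_splits; presburger)

lemma mod_eq_nat_int: "x < p \<Longrightarrow> y < p \<Longrightarrow> int x mod int p = int y mod int p \<Longrightarrow> x = (y::nat)"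
  by (metis mod_less of_nat_eq_iff zmod_int)

lemma Db_refl:
  assumes "odd p" "i \<in> {1..p-1}" "b < p" "b' = (p div 2 + p - b) mod p"
  shows "Db p b' i j = (p div 2 + p - Db p b (p - i) j) mod p"
proof -
  let ?h = "p div 2"
  define D where "D = Db p b (p - i) j"
  have p0: "p > 0" using assms by auto
  have Dlt: "D < p" using p0 unfolding D_def Db_def by simp
  have e1: "int (Db p b' i j) = (int i * int j + (int ?h + int p - int b) mod int p) mod int p"
    using assms(3,4) unfolding Db_def D0_def
    by (simp add: zmod_int mod_add_left_eq of_nat_diff)
  have ip: "i \<le> p" using assms(2) by auto
  have e2: "int D = ((int p - int i) * int j + int b) mod int p"
    using ip unfolding D_def Db_def D0_def
    by (simp add: zmod_int mod_add_left_eq of_nat_diff)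
  have e3: "int ((?h + p - D) mod p) = (int ?h + int p - int D) mod int p"
    using Dlt by (simp add: zmod_int of_nat_diff)
  have "(int i * int j + (int ?h + int p - int b) mod int p) mod int p
      = (int i * int j + (int ?h + int p - int b)) mod int p"
    by (simp add: mod_add_right_eq)
  also have "\<dots> = (int ?h + int p - ((int p - int i) * int j + int b)) mod int p"
  proof -
    have "(int i * int j + (int ?h + int p - int b)) - (int ?h + int p - ((int p - int i) * int j + int b))
        = int p * int j" by (simp add: algebra_simps)
    then show ?thesis by (simp add: mod_eq_dvd_iff)
  qed
  also have "\<dots> = (int ?h + int p - ((int p - int i) * int j + int b) mod int p) mod int p"
    by (simp add: mod_diff_right_eq)
  finally have "int (Db p b' i j) mod int p = int ((?h + p - D) mod p) mod int p"
    using e1 e2 e3 by simp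
  then show ?thesis unfolding D_def[symmetric]
    by (intro mod_eq_nat_int[of _ p]) (auto simp: Db_def p0)
qed

theorem proposition1:
  fixes p b b' :: nat
  assumes "prime p" and "odd p"
    and "b < p" and "b' < p" and "b \<noteq> b'"
    and "2 * (b + b') = p - 1 \<or> 2 * (b + b') = 3 * p - 1"
  shows "r_ave (p - 1) (p - 1) (Etilde p b) = r_ave (p - 1) (p - 1) (Etilde p b')"
proof -
  obtain k where k: "p = 2 * k + 1" using assms(2) oddE by blast
  have pd: "p div 2 = k" using k by simp
  have p2: "p \<ge> 2" using assms(1) prime_ge_2_nat by blast
  have b': "b' = (p div 2 + p - b) mod p"
  proof (cases "2 * (b + b') = p - 1")
    case True
    then have "b + b' = k" using k by simp
    then have "p div 2 + p - b = b' + p" using pd by linarith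
    then show ?thesis using assms(4) by simp
  next
    case False
    then have "b + b' = k + p" using assms(6) k by simp
    then have "p div 2 + p - b = b'" using pd by linarith
    then show ?thesis using assms(4) by simp
  qed
  have wb: "williams p b' = p - 1 - williams p b"
    using williams_refl[OF assms(2,3)] b' by simp
  have key: "Etilde p b' i j = real p - Etilde p b (p - i) j"
    if i: "i \<in> {1..p-1}" and j: "j \<in> {1..p-1}" for i j
  proof -
    define D where "D = Db p b (p - i) j"
    have Dlt: "D < p" using p2 unfolding D_def Db_def by simp
    have E': "Eb p b' i j = p - 1 - williams p D"
      unfolding Eb_def Db_refl[OF assms(2) i assms(3) b'] D_def[symmetric]
      using williams_refl[OF assms(2) Dlt] .
    define x where "x = williams p D"
    define w where "w = williams p b"
    have xlt: "x < p" using williams_lt[OF Dlt] x_def by simp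
    have wlt: "w < p" using williams_lt[OF assms(3)] w_def by simp
    have "D \<noteq> b"
    proof
      assume "D = b"
      then have "((p - i) * j + b) mod p = b mod p"
        using assms(3) unfolding D_def Db_def D0_def by (simp add: mod_add_left_eq)
      then have "p dvd (p - i) * j"
        using mod_eq_dvd_iff_nat[of b "(p - i) * j + b" p] by simp
      then have "p dvd (p - i) \<or> p dvd j" using assms(1) prime_dvd_mult_iff by blast
      then show False using i j by (auto dest: dvd_imp_le)
    qed
    then have xw: "x \<noteq> w" unfolding x_def w_def
      using williams_inj[OF assms(2) Dlt assms(3)] by blast
    have E: "Eb p b (p - i) j = x" unfolding Eb_def x_def D_def ..
    show ?thesis
      unfolding Etilde_def Let_def E E' wb x_def[symmetric] w_def[symmetric]
      using xlt wlt xw by (auto simp: of_nat_diff)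
  qed
  have bij: "bij_betw (\<lambda>i. p - i) {1..p-1} {1..p-1}"
    by (rule bij_betw_byWitness[where f'="\<lambda>i. p - i"]) auto
  have n: "p - 1 > 0" using p2 by simp
  have pe: "pearson (p - 1) (Etilde p b') u v = pearson (p - 1) (Etilde p b) u v"
    if "u \<in> {1..p-1}" "v \<in> {1..p-1}" for u v
    by (rule pearson_refl[OF bij _ n, where c="real p"]) (use key that in auto)
  have "(\<Sum>u\<in>{1..p-1}. \<Sum>v\<in>{1..p-1} - {u}. \<bar>pearson (p - 1) (Etilde p b) u v\<bar>)
     = (\<Sum>u\<in>{1..p-1}. \<Sum>v\<in>{1..p-1} - {u}. \<bar>pearson (p - 1) (Etilde p b') u v\<bar>)"
  proof (intro sum.cong refl)
    fix u v assume "u \<in> {1..p-1}" "v \<in> {1..p-1} - {u}"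
    then show "\<bar>pearson (p - 1) (Etilde p b) u v\<bar> = \<bar>pearson (p - 1) (Etilde p b') u v\<bar>"
      using pe by simp
  qed
  then show ?thesis unfolding r_ave_def by simp
qed

end
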